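(* Let $(A,\star_A,\omega)$ be a quadratic perm algebra and let $P:A\to A$ be either an averaging operator or a derivation of $(A,\star_A)$. Define $x\circ_A y=P(x)\star_A y-x\star_A P(y)$ for all $x,y\in A$. Then $(A,\circ_A)$ is a Leibniz algebra, and $\omega$ is a nondegenerate skew-symmetric $2$-cocycle on $(A,\circ_A)$.
   Context: All vector spaces are finite-dimensional over a field $\mathbb K$ of characteristic zero. A perm algebra is a vector space $A$ with a multiplication $\star_A$ such that $x\star_A(y\star_A z)=(x\star_A y)\star_A z=(y\star_A x)\star_A z$ for all $x,y,z$. A quadratic perm algebra $(A,\star_A,\omega)$ is a perm algebra with a nondegenerate skew-symmetric bilinear form $\omega$ such that $\omega(x\star_A y,z)=\omega(x,y\star_A z-z\star_A y)$ for all $x,y,z$. A linear map $P:A\to A$ is an averaging operator of $(A,\star_A)$ if $P(x)\star_A P(y)=P(P(x)\star_A y)=P(x\star_A P(y))$ for all $x,y$, and a derivation if $P(x\star_A y)=P(x)\star_A y+x\star_A P(y)$ for all $x,y$. A Leibniz algebra is a vector space $A$ with a multiplication $\circ_A$ satisfying $x\circ_A(y\circ_A z)=(x\circ_A y)\circ_A z+y\circ_A(x\circ_A z)$. A bilinear form $\omega$ on a Leibniz algebra $(A,\circ_A)$ is a $2$-cocycle if $\omega(z,x\circ_A y)=\omega(x,y\circ_A z+z\circ_A y)-\omega(y,x\circ_A z)$ for all $x,y,z\in A$. *)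

theory Defs
  imports Main "HOL.Vector_Spaces"
begin

definition fin_dim_vs :: "('k::field_char_0 \<Rightarrow> 'v::ab_group_add \<Rightarrow> 'v) \<Rightarrow> bool" where
  "fin_dim_vs sc \<longleftrightarrow> (\<exists>B. finite_dimensional_vector_space sc B)"

definition bilinear_op :: "('k::field \<Rightarrow> 'v::ab_group_add \<Rightarrow> 'v) \<Rightarrow> ('v \<Rightarrow> 'v \<Rightarrow> 'v) \<Rightarrow> bool" where
  "bilinear_op sc m \<longleftrightarrow> (\<forall>x. Vector_Spaces.linear sc sc (m x)) \<and> (\<forall>y. Vector_Spaces.linear sc sc (\<lambda>x. m x y))"

definition bilinear_form :: "('k::field \<Rightarrow> 'v::ab_group_add \<Rightarrow> 'v) \<Rightarrow> ('v \<Rightarrow> 'v \<Rightarrow> 'k) \<Rightarrow> bool" where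
  "bilinear_form sc w \<longleftrightarrow> (\<forall>x. Vector_Spaces.linear sc (*) (w x)) \<and> (\<forall>y. Vector_Spaces.linear sc (*) (\<lambda>x. w x y))"

definition nondegenerate :: "('v::ab_group_add \<Rightarrow> 'v \<Rightarrow> 'k::field) \<Rightarrow> bool" where
  "nondegenerate w \<longleftrightarrow> (\<forall>x. (\<forall>y. w x y = 0) \<longrightarrow> x = 0) \<and> (\<forall>y. (\<forall>x. w x y = 0) \<longrightarrow> y = 0)"

definition skew_symmetric :: "('v \<Rightarrow> 'v \<Rightarrow> 'k::field) \<Rightarrow> bool" where
  "skew_symmetric w \<longleftrightarrow> (\<forall>x y. w x y = - w y x)"

definition perm_algebra :: "('k::field \<Rightarrow> 'v::ab_group_add \<Rightarrow> 'v) \<Rightarrow> ('v \<Rightarrow> 'v \<Rightarrow> 'v) \<Rightarrow> bool" where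
  "perm_algebra sc m \<longleftrightarrow> bilinear_op sc m \<and>
     (\<forall>x y z. m x (m y z) = m (m x y) z \<and> m (m x y) z = m (m y x) z)"

definition quadratic_perm_algebra ::
  "('k::field \<Rightarrow> 'v::ab_group_add \<Rightarrow> 'v) \<Rightarrow> ('v \<Rightarrow> 'v \<Rightarrow> 'v) \<Rightarrow> ('v \<Rightarrow> 'v \<Rightarrow> 'k) \<Rightarrow> bool" where
  "quadratic_perm_algebra sc m w \<longleftrightarrow> perm_algebra sc m \<and> bilinear_form sc w \<and>
     nondegenerate w \<and> skew_symmetric w \<and>
     (\<forall>x y z. w (m x y) z = w x (m y z - m z y))"

definition averaging_operator ::
  "('k::field \<Rightarrow> 'v::ab_group_add \<Rightarrow> 'v) \<Rightarrow> ('v \<Rightarrow> 'v \<Rightarrow> 'v) \<Rightarrow> ('v \<Rightarrow> 'v) \<Rightarrow> bool" where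
  "averaging_operator sc m P \<longleftrightarrow> Vector_Spaces.linear sc sc P \<and>
     (\<forall>x y. m (P x) (P y) = P (m (P x) y) \<and> P (m (P x) y) = P (m x (P y)))"

definition derivation ::
  "('k::field \<Rightarrow> 'v::ab_group_add \<Rightarrow> 'v) \<Rightarrow> ('v \<Rightarrow> 'v \<Rightarrow> 'v) \<Rightarrow> ('v \<Rightarrow> 'v) \<Rightarrow> bool" where
  "derivation sc m P \<longleftrightarrow> Vector_Spaces.linear sc sc P \<and> (\<forall>x y. P (m x y) = m (P x) y + m x (P y))"

definition leibniz_algebra :: "('k::field \<Rightarrow> 'v::ab_group_add \<Rightarrow> 'v) \<Rightarrow> ('v \<Rightarrow> 'v \<Rightarrow> 'v) \<Rightarrow> bool" where
  "leibniz_algebra sc m \<longleftrightarrow> bilinear_op sc m \<and>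
     (\<forall>x y z. m x (m y z) = m (m x y) z + m y (m x z))"

definition two_cocycle :: "('v::ab_group_add \<Rightarrow> 'v \<Rightarrow> 'v) \<Rightarrow> ('v \<Rightarrow> 'v \<Rightarrow> 'k::field) \<Rightarrow> bool" where
  "two_cocycle m w \<longleftrightarrow> (\<forall>x y z. w z (m x y) = w x (m y z + m z y) - w y (m x z))"

end

theory Submission
  imports Defs
begin

lemma lin_facts:
  assumes "Vector_Spaces.linear s1 s2 f"
  shows "f (a+b) = f a + f b" "f (a-b) = f a - f b" "f (s1 c a) = s2 c (f a)"
  using assms unfolding linear_iff_module_hom
  by (auto simp: module_hom.add module_hom.diff module_hom.scale)

theorem proposition2p13:
  fixes sc :: "'k::field_char_0 \<Rightarrow> 'v::ab_group_add \<Rightarrow> 'v"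
    and mult :: "'v \<Rightarrow> 'v \<Rightarrow> 'v"
    and \<omega> :: "'v \<Rightarrow> 'v \<Rightarrow> 'k"
    and P :: "'v \<Rightarrow> 'v"
  assumes "vector_space sc"
    and "fin_dim_vs sc"
    and "quadratic_perm_algebra sc mult \<omega>"
    and "averaging_operator sc mult P \<or> derivation sc mult P"
  shows "leibniz_algebra sc (\<lambda>x y. mult (P x) y - mult x (P y))
     \<and> bilinear_form sc \<omega> \<and> nondegenerate \<omega> \<and> skew_symmetric \<omega>
     \<and> two_cocycle (\<lambda>x y. mult (P x) y - mult x (P y)) \<omega>"
proof -
  interpret vs: vector_space sc by fact
  have q: "perm_algebra sc mult" "bilinear_form sc \<omega>" "nondegenerate \<omega>" "skew_symmetric \<omega>"
    and inv: "\<And>x y z. \<omega> (mult x y) z = \<omega> x (mult y z - mult z y)"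
    using assms(3) unfolding quadratic_perm_algebra_def by auto
  have bo: "\<And>x. Vector_Spaces.linear sc sc (mult x)" "\<And>y. Vector_Spaces.linear sc sc (\<lambda>x. mult x y)"
    and as1: "\<And>x y z. mult x (mult y z) = mult (mult x y) z"
    and as2: "\<And>x y z. mult (mult x y) z = mult (mult y x) z"
    using q(1) unfolding perm_algebra_def bilinear_op_def by auto
  have PL: "Vector_Spaces.linear sc sc P"
    using assms(4) unfolding averaging_operator_def derivation_def by auto
  have wl: "\<And>x. Vector_Spaces.linear sc (*) (\<omega> x)"
    using q(2) unfolding bilinear_form_def by auto
  have sk: "\<And>x y. \<omega> x y = - \<omega> y x" using q(4) unfolding skew_symmetric_def by blast
  note ml = lin_facts[OF bo(1)] lin_facts[OF bo(2), simplified]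
  note pl = lin_facts[OF PL]
  have z1: "mult a 0 = 0" for a using ml(2)[of a 0 0] by simp
  have z2: "mult 0 a = 0" for a using ml(5)[of 0 0 a] by simp
  note wfl = lin_facts[OF wl]
  define t where "t a b c = mult a (mult b c)" for a b c
  have t1: "\<And>a b c. mult a (mult b c) = t a b c" by (simp add: t_def)
  have t2: "\<And>a b c. mult (mult a b) c = t a b c" by (simp add: t_def as1)
  have tsym: "\<And>a b c. t a b c = t b a c" by (metis t2 as2)
  have leib: "\<forall>x y z. mult (P x) (mult (P y) z - mult y (P z)) - mult x (P (mult (P y) z - mult y (P z))) =
      mult (P (mult (P x) y - mult x (P y))) z - mult (mult (P x) y - mult x (P y)) (P z)
    + (mult (P y) (mult (P x) z - mult x (P z)) - mult y (P (mult (P x) z - mult x (P z))))"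
  proof (intro allI)
    fix x y z
    show "mult (P x) (mult (P y) z - mult y (P z)) - mult x (P (mult (P y) z - mult y (P z))) =
      mult (P (mult (P x) y - mult x (P y))) z - mult (mult (P x) y - mult x (P y)) (P z)
    + (mult (P y) (mult (P x) z - mult x (P z)) - mult y (P (mult (P x) z - mult x (P z))))"
    using assms(4)
    proof
      assume "averaging_operator sc mult P"
      then have av: "\<And>a b. P (mult (P a) b) = mult (P a) (P b)" "\<And>a b. P (mult a (P b)) = mult (P a) (P b)"
        unfolding averaging_operator_def by auto
      show ?thesis
        by (simp add: z1 z2 pl ml av t1 t2 algebra_simps tsym[of "P x" "P y"] tsym[of x "P y"] tsym[of y "P x"])
    next
      assume "derivation sc mult P"
      then have dv: "\<And>a b. P (mult a b) = mult (P a) b + mult a (P b)"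
        unfolding derivation_def by auto
      show ?thesis
        by (simp add: pl ml dv t1 t2 algebra_simps tsym[of "P x" "P y"] tsym[of x "P y"] tsym[of y "P x"]
             tsym[of x "P (P y)"] tsym[of y "P (P x)"] tsym[of x y])
    qed
  qed
  have lin1: "Vector_Spaces.linear sc sc (\<lambda>y. mult (P x) y - mult x (P y))" for x
    unfolding linear_iff using pl ml by (simp add: vs.scale_right_diff_distrib vs.vector_space_axioms)
  have lin2: "Vector_Spaces.linear sc sc (\<lambda>x. mult (P x) y - mult x (P y))" for y
    unfolding linear_iff using pl ml by (simp add: vs.scale_right_diff_distrib vs.vector_space_axioms)
  have I: "\<And>a b c. \<omega> c (mult a b) + \<omega> b (mult a c) = 0"
  proof -
    fix a b c
    have "\<omega> b (mult a c) = - \<omega> a (mult c b - mult b c)" using sk inv by metis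
    moreover have "\<omega> c (mult a b) = - \<omega> a (mult b c - mult c b)" using sk inv by metis
    ultimately show "\<omega> c (mult a b) + \<omega> b (mult a c) = 0" by (simp add: wfl)
  qed
  have II: "\<And>a b c. \<omega> c (mult a b) + \<omega> a (mult b c) - \<omega> a (mult c b) = 0"
  proof -
    fix a b c
    have "\<omega> c (mult a b) = - \<omega> a (mult b c - mult c b)" using sk[of c "mult a b"] inv[of a b c] by simp
    then show "\<omega> c (mult a b) + \<omega> a (mult b c) - \<omega> a (mult c b) = 0" by (simp add: wfl)
  qed
  have coc: "two_cocycle (\<lambda>x y. mult (P x) y - mult x (P y)) \<omega>"
    unfolding two_cocycle_def
  proof (intro allI)
    fix x y z
    have a: "\<omega> z (mult (P x) y) = - \<omega> y (mult (P x) z)" using I[where a="P x" and b=y and c=z] by (simp add: eq_neg_iff_add_eq_0)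
    have b: "\<omega> z (mult x (P y)) = \<omega> x (mult z (P y)) - \<omega> x (mult (P y) z)" using II[where a=x and b="P y" and c=z]
      by (simp add: algebra_simps)
    have c: "\<omega> y (mult x (P z)) = \<omega> x (mult y (P z)) - \<omega> x (mult (P z) y)"
    proof -
      have h1: "\<omega> y (mult x (P z)) = - \<omega> (P z) (mult x y)"
        using I[where a=x and b=y and c="P z"] by (simp add: eq_neg_iff_add_eq_0 add.commute)
      have h2: "\<omega> x (mult y (P z)) = \<omega> x (mult (P z) y) - \<omega> (P z) (mult x y)"
        using II[where a=x and b=y and c="P z"] by (simp add: algebra_simps)
      show ?thesis unfolding h1 h2 by simp
    qed
    show "\<omega> z (mult (P x) y - mult x (P y)) =
      \<omega> x (mult (P y) z - mult y (P z) + (mult (P z) y - mult z (P y))) - \<omega> y (mult (P x) z - mult x (P z))"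
      by (simp add: wfl a b c algebra_simps)
  qed
  show ?thesis
    unfolding leibniz_algebra_def bilinear_op_def
    using leib lin1 lin2 q coc by blast
qed

end
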